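(* Let $L$ be an infinite set and consider the edgeless cube $Q_L$. There is a basic sequence $s$ that is convergent over $f_{\mathrm{solved}}$ whose concatenation with itself ($s$ followed by $s$) is not convergent over $f_{\mathrm{solved}}$. In particular, the basic sequences convergent over $f_{\mathrm{solved}}$ are not closed under concatenation.
   Context: Let $L$ be an infinite set, $-L=\{-r:r\in L\}$ a disjoint copy of $L$, and $0$ a new element; $L^\dagger=-L\cup\{0\}\cup L$ with $-(-r)=r$, $-0=0$. Adjoin $\pm\infty$ with $-(+\infty)=-\infty$ and set $\bar L^\dagger=L^\dagger\cup\{\pm\infty\}$. Points of $U=(\bar L^\dagger)^3$ have coordinates $x,y,z$. The edgeless cube $Q_L$ is the set of cells: points of $U$ with exactly one coordinate in $\{\pm\infty\}$. For $i\in\{x,y,z\}$, $\alpha\in\bar L^\dagger$, the quarter-turn twist $T_{i,\alpha}$ is the permutation of cells fixing every cell $p$ with $p_i\ne\alpha$ and acting on the others by $T_{x,\alpha}(\alpha,y,z)=(\alpha,-z,y)$, $T_{y,\alpha}(x,\alpha,z)=(z,\alpha,-x)$, $T_{z,\alpha}(x,y,\alpha)=(-y,x,\alpha)$. Basic twists are $T,T^2,T^3$ for quarter-turn twists $T$. A basic sequence is a sequence $\langle\sigma_\eta:\eta<\theta\rangle$ of basic twists of ordinal length $\theta$. A configuration is a map $f$ from cells to the six colors red, white, green, orange, yellow, blue together with a special value NaC; it is legal if it never takes value NaC. The solved configuration $f_{\mathrm{solved}}$ colors a cell red, blue, white, orange, green, yellow according as $x=+\infty$, $y=+\infty$, $z=+\infty$,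 $x=-\infty$, $y=-\infty$, $z=-\infty$. A twist $\sigma$ acts by $(\sigma f)(c)=f(\sigma^{-1}c)$. Applying $\langle\sigma_\eta:\eta<\theta\rangle$ to $f_0$ produces $f_{\eta+1}=\sigma_\eta f_\eta$, and for limit $\lambda\le\theta$, $f_\lambda(c)$ is the eventually constant value of $f_\eta(c)$ ($\eta<\lambda$) if it exists and NaC otherwise; $f_\theta$ is the terminal configuration. The sequence is convergent over $f_0$ if $f_\theta$ is legal. *)

theory Defs
  imports Main
begin

text \<open>Coordinates: elements of the extended set L-bar-dagger, built over an
  element type 'a; only Pos r / Neg r with r in L are valid.\<close>
datatype 'a coord = Pos 'a | Neg 'a | Zero | PInf | NInf

fun cneg :: "'a coord \<Rightarrow> 'a coord" where
  "cneg (Pos r) = Neg r" | "cneg (Neg r) = Pos r" | "cneg Zero = Zero"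
| "cneg PInf = NInf" | "cneg NInf = PInf"

fun valid :: "'a set \<Rightarrow> 'a coord \<Rightarrow> bool" where
  "valid L (Pos r) = (r \<in> L)" | "valid L (Neg r) = (r \<in> L)" | "valid L _ = True"

definition is_inf :: "'a coord \<Rightarrow> bool" where
  "is_inf c \<longleftrightarrow> c = PInf \<or> c = NInf"

type_synonym 'a point = "'a coord \<times> 'a coord \<times> 'a coord"

text \<open>The edgeless cube Q_L: points of U with exactly one infinite coordinate.\<close>
definition cells :: "'a set \<Rightarrow> 'a point set" where
  "cells L = {(x, y, z). valid L x \<and> valid L y \<and> valid L z \<and>
      ((is_inf x \<and> \<not> is_inf y \<and> \<not> is_inf z) \<or>
       (\<not> is_inf x \<and> is_inf y \<and> \<not> is_inf z) \<or>
       (\<not> is_inf x \<and> \<not> is_inf y \<and> is_inf z))}"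

datatype axis = AX | AY | AZ

text \<open>Quarter-turn twist T_{i,alpha}, given on all of U (it preserves the cells).\<close>
fun qturn :: "axis \<Rightarrow> 'a coord \<Rightarrow> 'a point \<Rightarrow> 'a point" where
  "qturn AX \<alpha> (x, y, z) = (if x = \<alpha> then (x, cneg z, y) else (x, y, z))"
| "qturn AY \<alpha> (x, y, z) = (if y = \<alpha> then (z, y, cneg x) else (x, y, z))"
| "qturn AZ \<alpha> (x, y, z) = (if z = \<alpha> then (cneg y, x, z) else (x, y, z))"

text \<open>A basic twist T^k (k = 1,2,3) of a quarter-turn twist T_{i,alpha}.\<close>
type_synonym 'a btwist = "axis \<times> 'a coord \<times> nat"

definition is_basic :: "'a set \<Rightarrow> 'a btwist \<Rightarrow> bool" where
  "is_basic L t \<longleftrightarrow> (case t of (i, \<alpha>, k) \<Rightarrow> valid L \<alpha> \<and> k \<in> {1, 2, 3})"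

definition bt_fun :: "'a btwist \<Rightarrow> 'a point \<Rightarrow> 'a point" where
  "bt_fun t = (case t of (i, \<alpha>, k) \<Rightarrow> qturn i \<alpha> ^^ k)"

datatype color = Red | White | Green | Orange | Yellow | Blue | NaC

type_synonym 'a config = "'a point \<Rightarrow> color"

definition legal :: "'a set \<Rightarrow> 'a config \<Rightarrow> bool" where
  "legal L f \<longleftrightarrow> (\<forall>c \<in> cells L. f c \<noteq> NaC)"

definition f_solved :: "'a config" where
  "f_solved = (\<lambda>(x, y, z).
     if x = PInf then Red else if y = PInf then Blue else if z = PInf then White
     else if x = NInf then Orange else if y = NInf then Green else if z = NInf then Yellow
     else NaC)"

definition act :: "'a btwist \<Rightarrow> 'a config \<Rightarrow> 'a config" where
  "act t f = f \<circ> inv (bt_fun t)"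

text \<open>A basic sequence of ordinal length: a well-order r (its order type is theta)
  with a basic twist at each position.\<close>
definition basic_seq :: "'a set \<Rightarrow> 'i rel \<Rightarrow> ('i \<Rightarrow> 'a btwist) \<Rightarrow> bool" where
  "basic_seq L r \<sigma> \<longleftrightarrow> Well_order r \<and> (\<forall>i \<in> Field r. is_basic L (\<sigma> i))"

text \<open>Stages: Some i (i in Field r) is the stage just before twist sigma_i is applied;
  None is the terminal stage theta. preds r eta = positions strictly before eta.\<close>
definition preds :: "'i rel \<Rightarrow> 'i option \<Rightarrow> 'i set" where
  "preds r \<eta> = (case \<eta> of None \<Rightarrow> Field r
                  | Some j \<Rightarrow> {i \<in> Field r. (i, j) \<in> r \<and> i \<noteq> j})"

definition run :: "'i rel \<Rightarrow> ('i \<Rightarrow> 'a btwist) \<Rightarrow> 'a config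
                    \<Rightarrow> ('i option \<Rightarrow> 'a config) \<Rightarrow> bool" where
  "run r \<sigma> f0 F \<longleftrightarrow>
    (\<forall>\<eta> \<in> {None} \<union> Some ` Field r.
      (preds r \<eta> = {} \<longrightarrow> F \<eta> = f0) \<and>
      (\<forall>i \<in> preds r \<eta>. (\<forall>k \<in> preds r \<eta>. (k, i) \<in> r) \<longrightarrow> F \<eta> = act (\<sigma> i) (F (Some i))) \<and>
      (preds r \<eta> \<noteq> {} \<and> \<not> (\<exists>i \<in> preds r \<eta>. \<forall>k \<in> preds r \<eta>. (k, i) \<in> r) \<longrightarrow>
        (\<forall>c. F \<eta> c =
          (if \<exists>v. \<exists>i \<in> preds r \<eta>. \<forall>k \<in> preds r \<eta>. (i, k) \<in> r \<longrightarrow> F (Some k) c = v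
           then (THE v. \<exists>i \<in> preds r \<eta>. \<forall>k \<in> preds r \<eta>. (i, k) \<in> r \<longrightarrow> F (Some k) c = v)
           else NaC))))"

definition terminal :: "'i rel \<Rightarrow> ('i \<Rightarrow> 'a btwist) \<Rightarrow> 'a config \<Rightarrow> 'a config" where
  "terminal r \<sigma> f0 = (THE g. \<exists>F. run r \<sigma> f0 F \<and> F None = g)"

definition convergent :: "'a set \<Rightarrow> 'i rel \<Rightarrow> ('i \<Rightarrow> 'a btwist) \<Rightarrow> 'a config \<Rightarrow> bool" where
  "convergent L r \<sigma> f0 \<longleftrightarrow> legal L (terminal r \<sigma> f0)"

definition concat_rel :: "'i rel \<Rightarrow> 'j rel \<Rightarrow> ('i + 'j) rel" where
  "concat_rel r s = {(Inl a, Inl b) | a b. (a, b) \<in> r} \<union> {(Inr a, Inr b) | a b. (a, b) \<in> s}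
                    \<union> {(Inl a, Inr b) | a b. a \<in> Field r \<and> b \<in> Field s}"

end

theory Submission imports Defs begin

definition rr :: "nat rel" where "rr = {(i,j). j = 0 \<or> (0 < i \<and> i \<le> j)}"

lemma Field_rr[simp]: "Field rr = UNIV"
  unfolding Field_def rr_def by auto

lemma wo_rr: "Well_order rr"
proof -
  have lin: "linear_order_on UNIV rr"
    unfolding linear_order_on_def partial_order_on_def preorder_on_def refl_on_def trans_def antisym_def total_on_def rr_def
    by auto
  have "rr - Id \<subseteq> inv_image (less_than <*lex*> less_than) (\<lambda>i. (if i = 0 then 1 else 0::nat, i))"
    unfolding rr_def by (auto split: if_splits)
  then have "wf (rr - Id)" by (rule wf_subset[rotated]) auto
  then show ?thesis using lin unfolding well_order_on_def by simp
qed

definition Am :: "'a point \<Rightarrow> 'a point" where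
  "Am = (\<lambda>(x,y,z). if x = PInf then (x, cneg y, cneg z) else (x,y,z))"
definition Bm :: "'a \<Rightarrow> 'a point \<Rightarrow> 'a point" where
  "Bm a = (\<lambda>(x,y,z). if y = Pos a then (cneg x, y, cneg z) else (x,y,z))"

lemma cneg_cneg[simp]: "cneg (cneg c) = c" by (cases c) auto
lemma cneg_eq_iff[simp]: "cneg c = PInf \<longleftrightarrow> c = NInf" "cneg c = NInf \<longleftrightarrow> c = PInf"
  by (cases c; simp)+

lemma bt_A: "bt_fun (AX, PInf, 2) = Am"
  unfolding bt_fun_def Am_def by (auto simp: numeral_2_eq_2 fun_eq_iff)
lemma bt_B: "bt_fun (AY, Pos a, 2) = Bm a"
  unfolding bt_fun_def Bm_def by (auto simp: numeral_2_eq_2 fun_eq_iff)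

lemma Am_inv: "Am \<circ> Am = id" unfolding Am_def by (auto simp: fun_eq_iff)
lemma Bm_inv: "Bm a \<circ> Bm a = id" unfolding Bm_def by (auto simp: fun_eq_iff)

lemma act_A: "act (AX, PInf, 2) (f :: 'a config) = f \<circ> Am"
proof -
  have "inv Am = (Am :: 'a point \<Rightarrow> 'a point)" by (rule inv_unique_comp[OF Am_inv Am_inv])
  then show ?thesis unfolding act_def bt_A by simp
qed
lemma act_B: "act (AY, Pos a, 2) f = f \<circ> Bm a"
proof -
  have "inv (Bm a) = Bm a" by (rule inv_unique_comp[OF Bm_inv Bm_inv])
  then show ?thesis unfolding act_def bt_B by simp
qed

lemma solved_A: "f_solved \<circ> Am = f_solved"
  unfolding f_solved_def Am_def by (auto simp: fun_eq_iff)

lemma legal_B: "legal L (f_solved \<circ> Bm a)"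
  unfolding legal_def cells_def f_solved_def Bm_def is_inf_def by auto

lemma rr_mem[simp]: "(i,j) \<in> rr \<longleftrightarrow> j = 0 \<or> (0 < i \<and> i \<le> j)"
  unfolding rr_def by simp

lemma cc_mem[simp]:
  "(Inl i, Inl j) \<in> concat_rel r s \<longleftrightarrow> (i,j) \<in> r"
  "(Inr i, Inr j) \<in> concat_rel r s \<longleftrightarrow> (i,j) \<in> s"
  "(Inl i, Inr j) \<in> concat_rel r s \<longleftrightarrow> i \<in> Field r \<and> j \<in> Field s"
  "(Inr i, Inl j) \<notin> concat_rel r s"
  unfolding concat_rel_def by auto

lemma Field_cc[simp]: "Field (concat_rel rr rr) = UNIV"
proof -
  have "(x,x) \<in> concat_rel rr rr" for x by (cases x) auto
  then show ?thesis by (auto intro: FieldI1)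
qed

lemma preds_rr:
  "preds rr None = UNIV"
  "preds rr (Some 0) = {i. i \<noteq> 0}"
  "preds rr (Some (Suc n)) = {i. 0 < i \<and> i \<le> n}"
  unfolding preds_def by auto

lemma preds_cc:
  "preds (concat_rel rr rr) None = UNIV"
  "preds (concat_rel rr rr) (Some (Inl j)) = Inl ` preds rr (Some j)"
  "preds (concat_rel rr rr) (Some (Inr j)) = range Inl \<union> Inr ` preds rr (Some j)"
proof -
  have A: "x \<in> range Inl \<union> range Inr" for x :: "nat + nat" by (cases x) auto
  show "preds (concat_rel rr rr) None = UNIV" unfolding preds_def by simp
  show "preds (concat_rel rr rr) (Some (Inl j)) = Inl ` preds rr (Some j)"
  proof (rule set_eqI)
    fix x show "x \<in> preds (concat_rel rr rr) (Some (Inl j)) \<longleftrightarrow> x \<in> Inl ` preds rr (Some j)"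
      by (cases x) (auto simp: preds_def)
  qed
  show "preds (concat_rel rr rr) (Some (Inr j)) = range Inl \<union> Inr ` preds rr (Some j)"
  proof (rule set_eqI)
    fix x show "x \<in> preds (concat_rel rr rr) (Some (Inr j)) \<longleftrightarrow> x \<in> range Inl \<union> Inr ` preds rr (Some j)"
      by (cases x) (auto simp: preds_def)
  qed
qed

lemma RR_Inr0[simp]: "(k, Inr 0) \<in> concat_rel rr rr" by (cases k) auto

definition lim_val :: "'i set \<Rightarrow> 'i rel \<Rightarrow> ('i \<Rightarrow> 'a config) \<Rightarrow> 'a config" where
  "lim_val P r G = (\<lambda>c. if \<exists>v. \<exists>i \<in> P. \<forall>k \<in> P. (i, k) \<in> r \<longrightarrow> G k c = v
           then (THE v. \<exists>i \<in> P. \<forall>k \<in> P. (i, k) \<in> r \<longrightarrow> G k c = v)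
           else NaC)"

lemma run_def2: "run r \<sigma> f0 F \<longleftrightarrow>
    (\<forall>\<eta> \<in> {None} \<union> Some ` Field r.
      (preds r \<eta> = {} \<longrightarrow> F \<eta> = f0) \<and>
      (\<forall>i \<in> preds r \<eta>. (\<forall>k \<in> preds r \<eta>. (k, i) \<in> r) \<longrightarrow> F \<eta> = act (\<sigma> i) (F (Some i))) \<and>
      (preds r \<eta> \<noteq> {} \<and> \<not> (\<exists>i \<in> preds r \<eta>. \<forall>k \<in> preds r \<eta>. (k, i) \<in> r) \<longrightarrow>
        F \<eta> = lim_val (preds r \<eta>) r (\<lambda>k. F (Some k))))"
  unfolding run_def lim_val_def by (simp add: fun_eq_iff)

lemma lim_const:
  assumes "P \<noteq> {}" "\<forall>k\<in>P. G k c = v" "\<forall>i\<in>P. (i,i) \<in> r"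
  shows "lim_val P r G c = v"
proof -
  obtain i0 where "i0 \<in> P" using assms(1) by auto
  have ex: "\<exists>i \<in> P. \<forall>k \<in> P. (i, k) \<in> r \<longrightarrow> G k c = v" using assms \<open>i0 \<in> P\<close> by auto
  have "(THE v. \<exists>i \<in> P. \<forall>k \<in> P. (i, k) \<in> r \<longrightarrow> G k c = v) = v"
    apply (rule the_equality)
    using ex apply blast
    using assms by blast
  then show ?thesis unfolding lim_val_def using ex by auto
qed

lemma lim_nac:
  assumes "\<forall>i\<in>P. \<exists>k1\<in>P. \<exists>k2\<in>P. (i,k1) \<in> r \<and> (i,k2) \<in> r \<and> G k1 c \<noteq> G k2 c"
  shows "lim_val P r G c = NaC"
proof -
  have "\<not> (\<exists>v. \<exists>i \<in> P. \<forall>k \<in> P. (i, k) \<in> r \<longrightarrow> G k c = v)"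
  proof
    assume "\<exists>v. \<exists>i \<in> P. \<forall>k \<in> P. (i, k) \<in> r \<longrightarrow> G k c = v"
    then obtain v i where "i \<in> P" "\<forall>k \<in> P. (i, k) \<in> r \<longrightarrow> G k c = v" by blast
    with assms show False by blast
  qed
  then show ?thesis unfolding lim_val_def by (rule if_not_P)
qed

lemma lim_cong: "(\<And>k. k \<in> P \<Longrightarrow> G k = G' k) \<Longrightarrow> lim_val P r G = lim_val P r G'"
proof -
  assume a: "\<And>k. k \<in> P \<Longrightarrow> G k = G' k"
  have h: "\<And>c. (\<lambda>v. \<exists>i\<in>P. \<forall>k\<in>P. (i,k)\<in>r \<longrightarrow> G k c = v) = (\<lambda>v. \<exists>i\<in>P. \<forall>k\<in>P. (i,k)\<in>r \<longrightarrow> G' k c = v)" using a by auto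
  show ?thesis unfolding lim_val_def by (simp only: h)
qed

lemma run_E: "run r \<sigma> f0 F \<Longrightarrow> Field r = UNIV \<Longrightarrow> preds r \<eta> = {} \<Longrightarrow> F \<eta> = f0"
  unfolding run_def2 by (cases \<eta>) auto
lemma run_S: "run r \<sigma> f0 F \<Longrightarrow> Field r = UNIV \<Longrightarrow> i \<in> preds r \<eta> \<Longrightarrow> (\<forall>k\<in>preds r \<eta>. (k, i) \<in> r)
   \<Longrightarrow> F \<eta> = act (\<sigma> i) (F (Some i))"
  unfolding run_def2 by (cases \<eta>) auto
lemma run_L: "run r \<sigma> f0 F \<Longrightarrow> Field r = UNIV \<Longrightarrow> preds r \<eta> \<noteq> {} \<Longrightarrow>
   \<not> (\<exists>i \<in> preds r \<eta>. \<forall>k \<in> preds r \<eta>. (k, i) \<in> r) \<Longrightarrow>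
   F \<eta> = lim_val (preds r \<eta>) r (\<lambda>k. F (Some k))"
  unfolding run_def2 by (cases \<eta>) auto

definition sg :: "'a \<Rightarrow> nat \<Rightarrow> 'a btwist" where
  "sg a i = (if i = 0 then (AY, Pos a, 2) else (AX, PInf, 2))"

lemma run1_unique:
  assumes R: "run rr (sg a) f_solved F"
  shows "F None = f_solved \<circ> Bm a"
proof -
  have A: "F (Some (Suc n)) = f_solved" for n
  proof (induction n)
    case 0 show ?case by (rule run_E[OF R]) (auto simp: preds_rr)
  next
    case (Suc n)
    have "F (Some (Suc (Suc n))) = act (sg a (Suc n)) (F (Some (Suc n)))"
      by (rule run_S[OF R]) (auto simp: preds_rr)
    then show ?case using Suc by (simp add: sg_def act_A solved_A)
  qed
  have B: "F (Some 0) = f_solved"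
  proof -
    have "F (Some 0) = lim_val (preds rr (Some 0)) rr (\<lambda>k. F (Some k))"
    proof (rule run_L[OF R])
      show "preds rr (Some 0) \<noteq> {}" by (auto simp: preds_rr)
      show "\<not> (\<exists>i \<in> preds rr (Some 0). \<forall>k \<in> preds rr (Some 0). (k, i) \<in> rr)"
      proof
        assume "\<exists>i \<in> preds rr (Some 0). \<forall>k \<in> preds rr (Some 0). (k, i) \<in> rr"
        then obtain i where "i \<noteq> 0" "\<forall>k. k \<noteq> 0 \<longrightarrow> (k, i) \<in> rr" by (auto simp: preds_rr)
        then have "(Suc i, i) \<in> rr" by blast
        with \<open>i \<noteq> 0\<close> show False by simp
      qed
    qed simp
    also have "\<dots> = f_solved"
    proof (rule ext, rule lim_const)
      show "\<forall>k\<in>preds rr (Some 0). F (Some k) c = f_solved c" for c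
      proof
        fix k assume "k \<in> preds rr (Some 0)"
        then obtain m where "k = Suc m" by (cases k) (auto simp: preds_rr)
        then show "F (Some k) c = f_solved c" using A by simp
      qed
    qed (auto simp: preds_rr)
    finally show ?thesis .
  qed
  have "F None = act (sg a 0) (F (Some 0))"
    by (rule run_S[OF R]) (auto simp: preds_rr)
  then show ?thesis using B by (simp add: sg_def act_B)
qed

lemma run1_exists: "run rr (sg a) f_solved (\<lambda>\<eta>. case \<eta> of None \<Rightarrow> f_solved \<circ> Bm a | Some _ \<Rightarrow> f_solved)"
  unfolding run_def2
proof (intro ballI conjI impI)
  fix \<eta> :: "nat option" 
  let ?F = "(\<lambda>\<eta>. case \<eta> of None \<Rightarrow> f_solved \<circ> Bm a | Some _ \<Rightarrow> (f_solved :: 'a config))"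
  show "preds rr \<eta> = {} \<Longrightarrow> ?F \<eta> = f_solved"
    by (cases \<eta>) (auto simp: preds_rr)
  show "?F \<eta> = act (sg a i) (?F (Some i))" if "i \<in> preds rr \<eta>" "\<forall>k\<in>preds rr \<eta>. (k, i) \<in> rr" for i
  proof (cases \<eta>)
    case None
    then have "i = 0" using that(2) by (auto simp: preds_rr)
    then show ?thesis using None by (simp add: sg_def act_B)
  next
    case (Some j)
    then have "i \<noteq> 0" using that(1) by (cases j) (auto simp: preds_rr)
    then show ?thesis using Some by (simp add: sg_def act_A solved_A)
  qed
  show "?F \<eta> = lim_val (preds rr \<eta>) rr (\<lambda>k. ?F (Some k))"
    if "preds rr \<eta> \<noteq> {} \<and> \<not> (\<exists>i \<in> preds rr \<eta>. \<forall>k \<in> preds rr \<eta>. (k, i) \<in> rr)"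
  proof (cases \<eta>)
    case None
    then show ?thesis using that by (auto simp: preds_rr)
  next
    case (Some j)
    show ?thesis
    proof (cases j)
      case 0
      have "f_solved = lim_val (preds rr (Some 0)) rr (\<lambda>k. (f_solved :: 'a config))"
        by (rule ext, rule lim_const[symmetric]) (auto simp: preds_rr)
      then show ?thesis unfolding Some 0 by simp
    next
      case (Suc m)
      then have "m \<in> preds rr \<eta>" "\<forall>k \<in> preds rr \<eta>. (k, m) \<in> rr" using that Some by (auto simp: preds_rr)
      then show ?thesis using that by blast
    qed
  qed
qed

abbreviation RR :: "(nat + nat) rel" where "RR \<equiv> concat_rel rr rr"

definition G0 :: "'a \<Rightarrow> nat + nat \<Rightarrow> 'a config" where
  "G0 a k = (case k of Inl _ \<Rightarrow> f_solved | Inr n \<Rightarrow> (if odd n then f_solved \<circ> Bm a else f_solved \<circ> Bm a \<circ> Am))"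

definition Hlim :: "'a \<Rightarrow> 'a config" where
  "Hlim a = lim_val (preds RR (Some (Inr 0))) RR (G0 a)"

definition F2 :: "'a \<Rightarrow> (nat + nat) option \<Rightarrow> 'a config" where
  "F2 a \<eta> = (case \<eta> of None \<Rightarrow> Hlim a \<circ> Bm a | Some k \<Rightarrow> (if k = Inr 0 then Hlim a else G0 a k))"

lemma Am_Am: "f \<circ> Am \<circ> Am = f" unfolding Am_def by (auto simp: fun_eq_iff)
lemma Am_Am2[simp]: "Am (Am p) = p" unfolding Am_def by (auto split: prod.splits)

lemma run2_unique:
  assumes R: "run RR (case_sum (sg a) (sg a)) f_solved F"
  shows "F = F2 a"
proof -
  have A: "F (Some (Inl (Suc n))) = f_solved" for n
  proof (induction n)
    case 0 show ?case by (rule run_E[OF R]) (auto simp: preds_rr preds_cc)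
  next
    case (Suc n)
    have "F (Some (Inl (Suc (Suc n)))) = act (case_sum (sg a) (sg a) (Inl (Suc n))) (F (Some (Inl (Suc n))))"
      by (rule run_S[OF R]) (auto simp: preds_rr preds_cc)
    then show ?case using Suc by (simp add: sg_def act_A solved_A)
  qed
  have B: "F (Some (Inl 0)) = f_solved"
  proof -
    have "F (Some (Inl 0)) = lim_val (preds RR (Some (Inl 0))) RR (\<lambda>k. F (Some k))"
    proof (rule run_L[OF R])
      show "preds RR (Some (Inl 0)) \<noteq> {}" by (auto simp: preds_rr preds_cc)
      show "\<not> (\<exists>i \<in> preds RR (Some (Inl 0)). \<forall>k \<in> preds RR (Some (Inl 0)). (k, i) \<in> RR)"
      proof
        assume "\<exists>i \<in> preds RR (Some (Inl 0)). \<forall>k \<in> preds RR (Some (Inl 0)). (k, i) \<in> RR"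
        then obtain j where "j \<noteq> 0" "\<forall>k. k \<noteq> 0 \<longrightarrow> (k, j) \<in> rr" by (auto simp: preds_rr preds_cc)
        then have "(Suc j, j) \<in> rr" by blast
        with \<open>j \<noteq> 0\<close> show False by simp
      qed
    qed simp
    also have "\<dots> = f_solved"
    proof (rule ext, rule lim_const)
      show "\<forall>k\<in>preds RR (Some (Inl 0)). F (Some k) c = f_solved c" for c
      proof
        fix k assume "k \<in> preds RR (Some (Inl 0))"
        then obtain j where "k = Inl j" "j \<noteq> 0" by (auto simp: preds_rr preds_cc)
        then show "F (Some k) c = f_solved c" using A[of "j - 1"] by simp
      qed
    qed (auto simp: preds_rr preds_cc)
    finally show ?thesis .
  qed
  have C: "F (Some (Inr (Suc n))) = G0 a (Inr (Suc n))" for n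
  proof (induction n)
    case 0
    have "F (Some (Inr (Suc 0))) = act (case_sum (sg a) (sg a) (Inl 0)) (F (Some (Inl 0)))"
      by (rule run_S[OF R]) (auto simp: preds_rr preds_cc)
    then show ?case using B by (simp add: sg_def act_B G0_def)
  next
    case (Suc n)
    have "F (Some (Inr (Suc (Suc n)))) = act (case_sum (sg a) (sg a) (Inr (Suc n))) (F (Some (Inr (Suc n))))"
      by (rule run_S[OF R]) (auto simp: preds_rr preds_cc)
    then show ?case using Suc by (simp add: sg_def act_A G0_def fun_eq_iff)
  qed
  have noMax0: "\<not> (\<exists>i \<in> preds RR (Some (Inr 0)). \<forall>k \<in> preds RR (Some (Inr 0)). (k, i) \<in> RR)"
  proof
    assume "\<exists>i \<in> preds RR (Some (Inr 0)). \<forall>k \<in> preds RR (Some (Inr 0)). (k, i) \<in> RR"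
    then obtain i where i: "i \<in> preds RR (Some (Inr 0))" "\<forall>k \<in> preds RR (Some (Inr 0)). (k, i) \<in> RR" by blast
    have "Inr 1 \<in> preds RR (Some (Inr 0))" by (simp add: preds_cc preds_rr)
    with i have "(Inr 1, i) \<in> RR" by blast
    then obtain j where j: "i = Inr j" by (cases i) auto
    have "Inr (Suc j) \<in> preds RR (Some (Inr 0))" by (simp add: preds_cc preds_rr)
    with i j have "(Suc j, j) \<in> rr" by fastforce
    moreover have "j \<noteq> 0" using i(1) j by (auto simp: preds_cc preds_rr)
    ultimately show False by simp
  qed
  have D: "F (Some (Inr 0)) = Hlim a"
  proof -
    have "F (Some (Inr 0)) = lim_val (preds RR (Some (Inr 0))) RR (\<lambda>k. F (Some k))"
      using noMax0 by (intro run_L[OF R]) (simp_all add: preds_cc)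
    also have "\<dots> = Hlim a" unfolding Hlim_def
    proof (rule lim_cong)
      fix k assume "k \<in> preds RR (Some (Inr 0))"
      then consider m where "k = Inl m" | m where "k = Inr m" "m \<noteq> 0"
        by (cases k) (auto simp: preds_cc preds_rr)
      then show "F (Some k) = G0 a k"
      proof cases
        case (1 m) then show ?thesis using A B by (cases m) (auto simp: G0_def)
      next
        case (2 m) then show ?thesis using C[of "m - 1"] by simp
      qed
    qed
    finally show ?thesis .
  qed
  have E: "F None = act (case_sum (sg a) (sg a) (Inr 0)) (F (Some (Inr 0)))"
    by (rule run_S[OF R]) (auto simp: preds_rr preds_cc)
  show ?thesis
  proof
    fix \<eta> show "F \<eta> = F2 a \<eta>"
    proof (cases \<eta>)
      case None then show ?thesis using D E by (simp add: F2_def sg_def act_B)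
    next
      case (Some k)
      show ?thesis
      proof (cases k)
        case (Inl j) then show ?thesis using A B Some by (cases j) (auto simp: F2_def G0_def)
      next
        case (Inr j) then show ?thesis using C D Some by (cases j) (auto simp: F2_def)
      qed
    qed
  qed
qed

lemma preds_Inr0: "preds RR (Some (Inr 0)) = range Inl \<union> Inr ` {i. i \<noteq> 0}"
  by (simp add: preds_cc preds_rr)

lemma run2_exists: "run RR (case_sum (sg a) (sg a)) f_solved (F2 a)"
  unfolding run_def2
proof (intro ballI conjI impI)
  fix \<eta> :: "(nat + nat) option"
  show "preds RR \<eta> = {} \<Longrightarrow> F2 a \<eta> = f_solved"
  proof (cases \<eta>)
    case (Some k) assume e: "preds RR \<eta> = {}"
    show ?thesis
    proof (cases k)
      case (Inl j) then show ?thesis using Some e by (auto simp: F2_def G0_def)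
    next
      case (Inr j) then show ?thesis using Some e by (auto simp: preds_cc)
    qed
  qed (auto simp: preds_cc)
  show "F2 a \<eta> = act (case_sum (sg a) (sg a) i) (F2 a (Some i))"
    if i: "i \<in> preds RR \<eta>" "\<forall>k\<in>preds RR \<eta>. (k, i) \<in> RR" for i
  proof (cases \<eta>)
    case None
    have "i = Inr 0"
    proof (cases i)
      case (Inl j)
      then have "(Inr 0, Inl j) \<in> RR" using i(2) None by (auto simp: preds_cc)
      then show ?thesis by simp
    next
      case (Inr j)
      then have "(Inr (Suc j), Inr j) \<in> RR" using i(2) None by (auto simp: preds_cc)
      then show ?thesis using Inr by simp
    qed
    then show ?thesis using None by (simp add: F2_def sg_def act_B)
  next
    case (Some k)
    show ?thesis
    proof (cases k)
      case (Inl j)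
      then obtain i' where "i = Inl i'" "i' \<noteq> 0" using i(1) Some by (cases j) (auto simp: preds_cc preds_rr)
      then show ?thesis using Some Inl by (simp add: F2_def G0_def sg_def act_A solved_A)
    next
      case (Inr j)
      show ?thesis
      proof (cases j)
        case 0
        have "Inr 1 \<in> preds RR \<eta>" using Some Inr 0 by (simp add: preds_cc preds_rr)
        then have "(Inr 1, i) \<in> RR" using i(2) by blast
        then obtain j' where j': "i = Inr j'" by (cases i) auto
        have "Inr (Suc j') \<in> preds RR \<eta>" using Some Inr 0 by (simp add: preds_cc preds_rr)
        then have "(Suc j', j') \<in> rr" using i(2) j' by fastforce
        moreover have "j' \<noteq> 0" using i(1) j' Some Inr 0 by (auto simp: preds_cc preds_rr)
        ultimately show ?thesis by simp
      next
        case (Suc m)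
        show ?thesis
        proof (cases m)
          case 0
          have "i = Inl 0"
          proof (cases i)
            case (Inl i')
            have "(Inl (Suc i'), i) \<in> RR" using i(2) Some Inr Suc 0 by (auto simp: preds_cc preds_rr)
            then show ?thesis using Inl by auto
          next
            case (Inr i') then show ?thesis using i(1) Some \<open>k = Inr j\<close> Suc 0 by (auto simp: preds_cc preds_rr)
          qed
          then show ?thesis using Some Inr Suc 0 by (simp add: F2_def G0_def sg_def act_B)
        next
          case (Suc m')
          have "Inr 1 \<in> preds RR \<eta>" using Some Inr \<open>j = Suc m\<close> Suc by (simp add: preds_cc preds_rr)
          then have "(Inr 1, i) \<in> RR" using i(2) by blast
          then obtain i' where i': "i = Inr i'" by (cases i) auto
          have "Inr m \<in> preds RR \<eta>" using Some Inr \<open>j = Suc m\<close> Suc by (simp add: preds_cc preds_rr)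
          then have "(m, i') \<in> rr" using i(2) i' by fastforce
          moreover have "0 < i' \<and> i' \<le> m" using i(1) i' Some Inr \<open>j = Suc m\<close> by (auto simp: preds_cc preds_rr)
          ultimately have "i' = m" using Suc by simp
          then show ?thesis using i' Some Inr \<open>j = Suc m\<close> Suc
            by (simp add: F2_def G0_def sg_def act_A Am_Am)
        qed
      qed
    qed
  qed
  show "F2 a \<eta> = lim_val (preds RR \<eta>) RR (\<lambda>k. F2 a (Some k))"
    if nm: "preds RR \<eta> \<noteq> {} \<and> \<not> (\<exists>i \<in> preds RR \<eta>. \<forall>k \<in> preds RR \<eta>. (k, i) \<in> RR)"
  proof (cases \<eta>)
    case None
    have "Inr 0 \<in> preds RR \<eta> \<and> (\<forall>k \<in> preds RR \<eta>. (k, Inr 0) \<in> RR)"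
    proof (intro conjI ballI)
      show "Inr 0 \<in> preds RR \<eta>" using None by (simp add: preds_cc)
      fix k show "(k, Inr 0) \<in> RR" by (cases k) auto
    qed
    then show ?thesis using nm by blast
  next
    case (Some k)
    show ?thesis
    proof (cases k)
      case (Inl j)
      show ?thesis
      proof (cases j)
        case 0
        have "F2 a (Some (Inl 0)) = lim_val (preds RR (Some (Inl 0))) RR (\<lambda>k. F2 a (Some k))"
          by (rule ext, rule lim_const[symmetric]) (auto simp: preds_cc preds_rr F2_def G0_def)
        then show ?thesis using Some Inl 0 by simp
      next
        case (Suc m)
        then have "m \<noteq> 0" using nm Some Inl by (auto simp: preds_cc preds_rr)
        then have "Inl m \<in> preds RR \<eta> \<and> (\<forall>k \<in> preds RR \<eta>. (k, Inl m) \<in> RR)"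
          using Some Inl Suc by (auto simp: preds_cc preds_rr)
        then show ?thesis using nm by blast
      qed
    next
      case (Inr j)
      show ?thesis
      proof (cases j)
        case 0
        have "Hlim a = lim_val (preds RR (Some (Inr 0))) RR (\<lambda>k. F2 a (Some k))"
          unfolding Hlim_def by (rule lim_cong) (auto simp: preds_Inr0 F2_def)
        then show ?thesis using Some Inr 0 by (simp add: F2_def)
      next
        case (Suc m)
        show ?thesis
        proof (cases m)
          case 0
          have "Inl 0 \<in> preds RR \<eta> \<and> (\<forall>k \<in> preds RR \<eta>. (k, Inl 0) \<in> RR)"
            using Some Inr Suc 0 by (auto simp: preds_cc preds_rr)
          then show ?thesis using nm by blast
        next
          case (Suc m')
          have "Inr m \<in> preds RR \<eta> \<and> (\<forall>k \<in> preds RR \<eta>. (k, Inr m) \<in> RR)"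
            using Some Inr \<open>j = Suc m\<close> Suc by (auto simp: preds_cc preds_rr)
          then show ?thesis using nm by blast
        qed
      qed
    qed
  qed
qed

lemma Hlim_nac: "Hlim a (PInf, Neg a, Zero) = NaC"
  unfolding Hlim_def
proof (rule lim_nac, intro ballI)
  fix i assume i: "i \<in> preds RR (Some (Inr 0))"
  obtain N where N: "(i, Inr (Suc (2*N))) \<in> RR" "(i, Inr (Suc (Suc (2*N)))) \<in> RR"
  proof (cases i)
    case (Inl j) then show ?thesis using that[of 0] by simp
  next
    case (Inr j)
    with i have "j \<noteq> 0" by (auto simp: preds_Inr0)
    then show ?thesis using that[of j] Inr by simp
  qed
  have v1: "G0 a (Inr (Suc (2*N))) (PInf, Neg a, Zero) = Red"
    by (simp add: G0_def Bm_def f_solved_def)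
  have v2: "G0 a (Inr (Suc (Suc (2*N)))) (PInf, Neg a, Zero) = Orange"
    by (simp add: G0_def Bm_def Am_def f_solved_def)
  show "\<exists>k1\<in>preds RR (Some (Inr 0)). \<exists>k2\<in>preds RR (Some (Inr 0)). (i, k1) \<in> RR \<and> (i, k2) \<in> RR \<and>
          G0 a k1 (PInf, Neg a, Zero) \<noteq> G0 a k2 (PInf, Neg a, Zero)"
    using N v1 v2 by (intro bexI[of _ "Inr (Suc (2*N))"] bexI[of _ "Inr (Suc (Suc (2*N)))"]) (auto simp: preds_Inr0)
qed

theorem mainTheorem10:
  fixes L :: "'a set"
  assumes "infinite L"
  shows "\<exists>(r :: nat rel) (\<sigma> :: nat \<Rightarrow> 'a btwist).
           basic_seq L r \<sigma> \<and> convergent L r \<sigma> f_solved \<and>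
           \<not> convergent L (concat_rel r r) (case_sum \<sigma> \<sigma>) f_solved"
proof -
  obtain a where a: "a \<in> L" using infinite_imp_nonempty[OF assms] by blast
  have bs: "basic_seq L rr (sg a)"
    unfolding basic_seq_def is_basic_def sg_def using wo_rr a by simp
  have t1: "terminal rr (sg a) f_solved = f_solved \<circ> Bm a"
    unfolding terminal_def
  proof (rule the_equality)
    show "\<exists>F. run rr (sg a) f_solved F \<and> F None = f_solved \<circ> Bm a"
      using run1_exists[of a] by (intro exI[of _ "\<lambda>\<eta>. case \<eta> of None \<Rightarrow> f_solved \<circ> Bm a | Some _ \<Rightarrow> f_solved"]) simp
  next
    fix g assume "\<exists>F. run rr (sg a) f_solved F \<and> F None = g"
    then obtain F where "run rr (sg a) f_solved F" "F None = g" by blast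
    then show "g = f_solved \<circ> Bm a" using run1_unique by metis
  qed
  have c1: "convergent L rr (sg a) f_solved"
    unfolding convergent_def t1 by (rule legal_B)
  have t2: "terminal RR (case_sum (sg a) (sg a)) f_solved = F2 a None"
    unfolding terminal_def
  proof (rule the_equality)
    show "\<exists>F. run RR (case_sum (sg a) (sg a)) f_solved F \<and> F None = F2 a None"
      using run2_exists[of a] by blast
  next
    fix g assume "\<exists>F. run RR (case_sum (sg a) (sg a)) f_solved F \<and> F None = g"
    then obtain F where "run RR (case_sum (sg a) (sg a)) f_solved F" "F None = g" by blast
    then show "g = F2 a None" using run2_unique by metis
  qed
  have cell: "(PInf, Neg a, Zero) \<in> cells L" using a by (simp add: cells_def is_inf_def)
  have "F2 a None (PInf, Neg a, Zero) = NaC"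
    using Hlim_nac by (simp add: F2_def Bm_def)
  then have c2: "\<not> convergent L RR (case_sum (sg a) (sg a)) f_solved"
    unfolding convergent_def t2 legal_def using cell by blast
  show ?thesis by (rule exI[of _ rr], rule exI[of _ "sg a"]) (intro conjI bs c1 c2)
qed

end
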